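(* There exists no constant $\alpha>0$ such that the class of coverage functions has Shapley value that is $\alpha$-approximable from samples over the uniform distribution on $2^N$.
   Context: $N=\{1,\dots,n\}$. A coverage function is $C(S)=|\bigcup_{i\in S}T_i|$ for some sets $T_i\subseteq U$ of a universe $U$. The Shapley value is $\phi_i=\mathbb{E}_\sigma[C(S_{\sigma<i}\cup\{i\})-C(S_{\sigma<i})]$ for a uniformly random permutation $\sigma$ of $N$, $S_{\sigma<i}$ the players before $i$. An algorithm $\alpha$-approximates ($\alpha\in(0,1]$) the Shapley value of a family $\mathcal{C}$ over $\mathcal{D}$ if for all $C\in\mathcal{C}$ and $\delta>0$, given $\mathrm{poly}(n,1/\delta,1/(1-\alpha))$ i.i.d. samples $(S,C(S))$, $S\sim\mathcal{D}$, it computes $\tilde\phi$ such that with probability at least $1-\delta$ over samples and its choices, for all $i$: if $\phi_i\ge1/\mathrm{poly}(n)$ then $\alpha\phi_i\le\tilde\phi_i\le\phi_i/\alpha$; if $\phi_i\le-1/\mathrm{poly}(n)$ then $\phi_i/\alpha\le\tilde\phi_i\le\alpha\phi_i$; if $|\phi_i|<1/\mathrm{poly}(n)$ then $|\phi_i-\tilde\phi_i|=o(1)$. The Shapley value of $\mathcal{C}$ is $\alpha$-approximable from samples over $\mathcal{D}$ if such an algorithm exists. *)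

theory Defs
  imports "HOL-Probability.Probability" "HOL-Computational_Algebra.Polynomial"
begin

definition coverage :: "(nat \<Rightarrow> nat set) \<Rightarrow> nat set \<Rightarrow> real" where
  "coverage T S = real (card (\<Union>i\<in>S. T i))"

text \<open>Shapley value of player i for v over N = {1..n}: expectation over a uniformly random
  permutation (sigma j = position of player j) of the marginal contribution of i.\<close>
definition shapley :: "nat \<Rightarrow> (nat set \<Rightarrow> real) \<Rightarrow> nat \<Rightarrow> real" where
  "shapley n v i =
     (\<Sum>\<sigma>\<in>{\<sigma>. \<sigma> permutes {1..n}}.
        v ({j\<in>{1..n}. \<sigma> j < \<sigma> i} \<union> {i}) - v {j\<in>{1..n}. \<sigma> j < \<sigma> i})
     / real (card {\<sigma>. \<sigma> permutes {1..n}})"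

fun iid_list :: "'a pmf \<Rightarrow> nat \<Rightarrow> 'a list pmf" where
  "iid_list D 0 = return_pmf []"
| "iid_list D (Suc m) = bind_pmf D (\<lambda>x. bind_pmf (iid_list D m) (\<lambda>xs. return_pmf (x # xs)))"

definition samples :: "nat \<Rightarrow> (nat set \<Rightarrow> real) \<Rightarrow> nat \<Rightarrow> (nat set \<times> real) list pmf" where
  "samples n v m = iid_list (map_pmf (\<lambda>S. (S, v S)) (pmf_of_set (Pow {1..n}))) m"

definition is_poly_fun :: "(nat \<Rightarrow> real) \<Rightarrow> bool" where
  "is_poly_fun p \<longleftrightarrow> (\<exists>P :: real poly. \<forall>n. p n = poly P (real n))"

text \<open>Accuracy requirement for one player, with threshold t = 1/poly(n) and o(1)-error e.\<close>
definition good_estimate :: "real \<Rightarrow> real \<Rightarrow> real \<Rightarrow> real \<Rightarrow> real \<Rightarrow> bool" where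
  "good_estimate \<alpha> t e \<phi> \<phi>' \<longleftrightarrow>
     (\<phi> \<ge> t \<longrightarrow> \<alpha> * \<phi> \<le> \<phi>' \<and> \<phi>' \<le> \<phi> / \<alpha>) \<and>
     (\<phi> \<le> - t \<longrightarrow> \<phi> / \<alpha> \<le> \<phi>' \<and> \<phi>' \<le> \<alpha> * \<phi>) \<and>
     (\<bar>\<phi>\<bar> < t \<longrightarrow> \<bar>\<phi> - \<phi>'\<bar> \<le> e)"

text \<open>A (randomized) algorithm A n \<delta> samples returns a distribution over estimates;
  m n \<delta> is its number of samples.\<close>
definition alpha_approximates_coverage_shapley ::
  "real \<Rightarrow> (nat \<Rightarrow> real \<Rightarrow> (nat set \<times> real) list \<Rightarrow> (nat \<Rightarrow> real) pmf) \<Rightarrow> (nat \<Rightarrow> real \<Rightarrow> nat) \<Rightarrow> bool" where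
  "alpha_approximates_coverage_shapley \<alpha> A m \<longleftrightarrow>
     (\<exists>c k. \<forall>n \<delta>. n \<ge> 1 \<longrightarrow> \<delta> > 0 \<longrightarrow>
         real (m n \<delta>) \<le> c * (1 + real n + 1 / \<delta> + 1 / (1 - \<alpha>)) ^ k) \<and>
     (\<exists>p e. is_poly_fun p \<and> (\<forall>n\<ge>1. p n > 0) \<and> e \<longlonglongrightarrow> 0 \<and>
        (\<forall>n\<ge>1. \<forall>T. (\<forall>i. finite (T i)) \<longrightarrow> (\<forall>\<delta>>0.
           measure_pmf.prob (bind_pmf (samples n (coverage T) (m n \<delta>)) (A n \<delta>))
             {\<phi>'. \<forall>i\<in>{1..n}. good_estimate \<alpha> (1 / p n) (e n) (shapley n (coverage T) i) (\<phi>' i)}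
           \<ge> 1 - \<delta>)))"

definition coverage_shapley_approximable :: "real \<Rightarrow> bool" where
  "coverage_shapley_approximable \<alpha> \<longleftrightarrow> (\<exists>A m. alpha_approximates_coverage_shapley \<alpha> A m)"

end

theory Submission imports Defs begin
lemma meas_bind: "measure (measure_pmf (bind_pmf M f)) X = (\<integral>x. measure (measure_pmf (f x)) X \<partial>measure_pmf M)"
  unfolding measure_pmf_bind
  apply (rule measure_pmf.measure_bind[where N="count_space UNIV"])
   apply (auto simp: space_subprob_algebra measure_pmf_in_subprob_algebra prob_space_imp_subprob_space measure_pmf.prob_space_axioms)
  done

lemma iid_map: "iid_list (map_pmf f D) m = map_pmf (map f) (iid_list D m)"
  by (induction m) (simp_all add: map_bind_pmf bind_map_pmf map_return_pmf)

lemma iid_bad: "measure (measure_pmf (iid_list D m)) {L. \<not> set L \<subseteq> G} \<le> real m * measure (measure_pmf D) (-G)"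
proof (induction m)
  case 0
  then show ?case by simp
next
  case (Suc m)
  let ?P = "measure (measure_pmf (iid_list D m)) {L. \<not> set L \<subseteq> G}"
  have inner: "measure (measure_pmf (bind_pmf (iid_list D m) (\<lambda>xs. return_pmf (x # xs)))) {L. \<not> set L \<subseteq> G}
      \<le> indicator (-G) x + ?P" for x
  proof -
    have e: "bind_pmf (iid_list D m) (\<lambda>xs. return_pmf (x # xs)) = map_pmf ((#) x) (iid_list D m)"
      by (simp add: map_pmf_def)
    show ?thesis
    proof (cases "x \<in> G")
      case True
      then have "((#) x) -` {L. \<not> set L \<subseteq> G} = {L. \<not> set L \<subseteq> G}" by auto
      then show ?thesis unfolding e using True by simp
    next
      case False
      then show ?thesis unfolding e using measure_pmf.prob_le_1[of "iid_list D m"] by simp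
    qed
  qed
  have "measure (measure_pmf (iid_list D (Suc m))) {L. \<not> set L \<subseteq> G}
     = (\<integral>x. measure (measure_pmf (bind_pmf (iid_list D m) (\<lambda>xs. return_pmf (x # xs)))) {L. \<not> set L \<subseteq> G} \<partial>measure_pmf D)"
    by (simp add: meas_bind)
  also have "\<dots> \<le> (\<integral>x. indicator (-G) x + ?P \<partial>measure_pmf D)"
    apply (rule integral_mono)
      apply (rule measure_pmf.integrable_const_bound[where B=1])
       apply simp
      apply simp
     apply (rule Bochner_Integration.integrable_add)
      apply (rule measure_pmf.integrable_const_bound[where B=1]) apply (auto simp: indicator_def)[2]
     apply simp
    using inner by simp
  also have "\<dots> = measure (measure_pmf D) (-G) + ?P"
    apply (subst Bochner_Integration.integral_add)
      apply (rule measure_pmf.integrable_const_bound[where B=1]) apply (auto simp: indicator_def)[2]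
     apply simp
    by (simp add: measure_pmf.emeasure_eq_measure)
  finally show ?case using Suc by (simp add: algebra_simps)
qed
lemma two_worlds:
  assumes G: "\<And>x. x \<in> G \<Longrightarrow> g1 x = g2 x" and XY: "X \<inter> Y = {}"
  shows "measure (measure_pmf (bind_pmf (map_pmf (map g1) (iid_list U m)) f)) X
       + measure (measure_pmf (bind_pmf (map_pmf (map g2) (iid_list U m)) f)) Y
       \<le> 1 + real m * measure (measure_pmf U) (-G)"
proof -
  let ?B = "{L. \<not> set L \<subseteq> G}"
  let ?h1 = "\<lambda>L. measure (measure_pmf (f (map g1 L))) X"
  let ?h2 = "\<lambda>L. measure (measure_pmf (f (map g2 L))) Y"
  have int1: "integrable (measure_pmf (iid_list U m)) ?h1"
    by (rule measure_pmf.integrable_const_bound[where B=1]) auto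
  have int2: "integrable (measure_pmf (iid_list U m)) ?h2"
    by (rule measure_pmf.integrable_const_bound[where B=1]) auto
  have int3: "integrable (measure_pmf (iid_list U m)) (\<lambda>L. 1 + indicator ?B L :: real)"
    by (rule measure_pmf.integrable_const_bound[where B=2]) (auto simp: indicator_def)
  have pt: "?h1 L + ?h2 L \<le> 1 + indicator ?B L" for L
  proof (cases "set L \<subseteq> G")
    case True
    have "\<forall>x\<in>set L. g1 x = g2 x" using True G by auto
    then have "map g1 L = map g2 L" by (metis map_eq_conv)
    then have eq: "?h1 L + ?h2 L = measure (measure_pmf (f (map g1 L))) X + measure (measure_pmf (f (map g1 L))) Y"
      by (simp only:)
    have "?h1 L + ?h2 L = measure (measure_pmf (f (map g1 L))) (X \<union> Y)"
      unfolding eq using XY by (simp add: measure_pmf.finite_measure_Union)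
    also have "\<dots> \<le> 1" by simp
    finally have "?h1 L + ?h2 L \<le> 1" .
    moreover have "(0::real) \<le> indicator ?B L" by simp
    ultimately show ?thesis by linarith
  next
    case False
    have "?h1 L \<le> 1" "?h2 L \<le> 1" by simp_all
    moreover have "indicator ?B L = (1::real)" using False by simp
    ultimately show ?thesis by linarith
  qed
  have "measure (measure_pmf (bind_pmf (map_pmf (map g1) (iid_list U m)) f)) X
       + measure (measure_pmf (bind_pmf (map_pmf (map g2) (iid_list U m)) f)) Y
       = (\<integral>L. ?h1 L + ?h2 L \<partial>measure_pmf (iid_list U m))"
    by (simp add: bind_map_pmf meas_bind Bochner_Integration.integral_add[OF int1 int2])
  also have "\<dots> \<le> (\<integral>L. 1 + indicator ?B L \<partial>measure_pmf (iid_list U m))"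
    by (rule integral_mono[OF Bochner_Integration.integrable_add[OF int1 int2] int3 pt])
  also have "\<dots> = 1 + measure (measure_pmf (iid_list U m)) ?B"
    apply (subst Bochner_Integration.integral_add)
      apply simp
     apply (rule measure_pmf.integrable_const_bound[where B=1]) apply (auto simp: indicator_def)[2]
    by simp
  also have "\<dots> \<le> 1 + real m * measure (measure_pmf U) (-G)"
    using iid_bad[of U m G] by simp
  finally show ?thesis .
qed
lemma shap2: "shapley n (coverage (\<lambda>j. if j = 1 then {} else B)) 1 = 0"
proof -
  have "(\<Union>j\<in>S \<union> {1}. if j = 1 then {} else B) = (\<Union>j\<in>S. if j = 1 then {} else B)" for S :: "nat set"
    by auto
  then show ?thesis unfolding shapley_def coverage_def by simp
qed

lemma shap1:
  assumes "n \<ge> 1"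
  shows "shapley n (coverage (\<lambda>j. {0..<K})) 1 \<ge> real K / fact n"
proof -
  let ?P = "{\<sigma>. \<sigma> permutes {1..n}}"
  let ?t = "\<lambda>\<sigma>. coverage (\<lambda>j. {0..<K}) ({j\<in>{1..n}. \<sigma> j < \<sigma> 1} \<union> {1}) - coverage (\<lambda>j. {0..<K}) {j\<in>{1..n}. \<sigma> j < \<sigma> 1}"
  have cov: "coverage (\<lambda>j. {0..<K}) S = (if S = {} then 0 else real K)" for S
    by (simp add: coverage_def)
  have nn: "\<And>\<sigma>. \<sigma> \<in> ?P \<Longrightarrow> 0 \<le> ?t \<sigma>" by (simp add: cov)
  have fin: "finite ?P" by (rule finite_permutations) simp
  have idP: "id \<in> ?P" by (simp add: permutes_id)
  have tid: "?t id = real K" by (simp add: cov)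
  have "?t id \<le> sum ?t ?P"
    by (rule member_le_sum[OF idP _ fin]) (rule nn, simp)
  then have "real K \<le> sum ?t ?P" by (simp only: tid)
  moreover have "card ?P = fact n" using card_permutations[of "{1..n}" n] by simp
  ultimately show ?thesis unfolding shapley_def
    by (simp add: divide_right_mono)
qed
lemma lim_aux: "((\<lambda>n::nat. (2 * real n)^k / 2^n) \<longlongrightarrow> 0) sequentially"
proof -
  have fl: "filterlim (\<lambda>n::nat. ln 2 * real n) at_top sequentially"
    by (rule filterlim_tendsto_pos_mult_at_top[OF tendsto_const _ filterlim_real_sequentially]) simp
  have "((\<lambda>n::nat. (ln 2 * real n)^k / exp (ln 2 * real n)) \<longlongrightarrow> 0) sequentially"
    by (rule filterlim_compose[OF tendsto_power_div_exp_0 fl])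
  then have L: "((\<lambda>n::nat. (2 / ln 2)^k * ((ln 2 * real n)^k / exp (ln 2 * real n))) \<longlongrightarrow> (2 / ln 2)^k * 0) sequentially"
    by (rule tendsto_mult_left)
  have eq: "(2 / ln 2)^k * ((ln 2 * real n)^k / exp (ln 2 * real n)) = (2 * real n)^k / 2^n" for n :: nat
  proof -
    have e: "exp (ln 2 * real n) = (2::real)^n"
      by (metis exp_ln exp_of_nat_mult mult.commute zero_less_numeral)
    have l: "ln (2::real) \<noteq> 0" by simp
    have m: "(2 / ln 2) * (ln 2 * real n) = 2 * real n" using l by simp
    have "(2 / ln 2)^k * (ln 2 * real n)^k = (2 * real n)^k"
      by (simp only: power_mult_distrib[symmetric] m)
    then show ?thesis unfolding e by (simp only: times_divide_eq_right)
  qed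
  show ?thesis using L unfolding eq by simp
qed
lemma growth:
  fixes c b :: real
  shows "\<exists>n\<ge>2. 2 * (c * (5 + real n + b) ^ k) < 2 ^ n"
proof -
  have lim: "((\<lambda>n::nat. (2 * real n)^k / 2^n) \<longlongrightarrow> 0) sequentially"
    by (rule lim_aux)
  have pos: "0 < 1 / (2 * (\<bar>c\<bar> + 1))" by simp
  have ev1: "eventually (\<lambda>n::nat. (2 * real n)^k / 2^n < 1 / (2 * (\<bar>c\<bar> + 1))) sequentially"
    using order_tendstoD(2)[OF lim pos] .
  have ev2: "eventually (\<lambda>n::nat. n \<ge> 2 \<and> 5 + real n + b \<ge> 0 \<and> 5 + real n + \<bar>b\<bar> \<le> 2 * real n) sequentially"
    unfolding eventually_sequentially
  proof (intro exI allI impI)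
    fix n :: nat assume h: "5 + nat \<lceil>\<bar>b\<bar>\<rceil> \<le> n"
    have c1: "real (nat \<lceil>\<bar>b\<bar>\<rceil>) \<ge> \<bar>b\<bar>" by (rule real_nat_ceiling_ge)
    have c2: "real (5 + nat \<lceil>\<bar>b\<bar>\<rceil>) \<le> real n" using h by (rule of_nat_mono)
    show "n \<ge> 2 \<and> 5 + real n + b \<ge> 0 \<and> 5 + real n + \<bar>b\<bar> \<le> 2 * real n"
    proof -
      have c2': "5 + real (nat \<lceil>\<bar>b\<bar>\<rceil>) \<le> real n" using c2 by (simp only: of_nat_add of_nat_numeral)
      have c3: "5 + \<bar>b\<bar> \<le> real n" using c1 c2' by linarith
      have c4: "n \<ge> 2" using h by linarith
      have c5: "- \<bar>b\<bar> \<le> b" by simp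
      show ?thesis using c3 c4 c5 by linarith
    qed
  qed
  have "\<exists>N. \<forall>n\<ge>N. (2 * real n)^k / 2^n < 1 / (2 * (\<bar>c\<bar> + 1)) \<and> (n \<ge> 2 \<and> 5 + real n + b \<ge> 0 \<and> 5 + real n + \<bar>b\<bar> \<le> 2 * real n)"
    using eventually_conj[OF ev1 ev2] unfolding eventually_sequentially .
  then obtain N where hN: "\<forall>n\<ge>N. (2 * real n)^k / 2^n < 1 / (2 * (\<bar>c\<bar> + 1)) \<and> (n \<ge> 2 \<and> 5 + real n + b \<ge> 0 \<and> 5 + real n + \<bar>b\<bar> \<le> 2 * real n)"
    by blast
  define n where "n = N"
  have n1: "(2 * real n)^k / 2^n < 1 / (2 * (\<bar>c\<bar> + 1))" and n2: "n \<ge> 2"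
    and n3: "5 + real n + b \<ge> 0" and n4: "5 + real n + \<bar>b\<bar> \<le> 2 * real n"
    using hN unfolding n_def by auto
  have A: "(2 * real n)^k * (2 * (\<bar>c\<bar> + 1)) < 2^n"
    using n1 by (simp add: field_simps)
  have B: "(5 + real n + b)^k \<le> (2 * real n)^k"
    by (rule power_mono) (use n3 n4 in auto)
  have C: "2 * (c * (5 + real n + b) ^ k) \<le> (5 + real n + b)^k * (2 * (\<bar>c\<bar> + 1))"
  proof -
    have "c * (5 + real n + b) ^ k \<le> (\<bar>c\<bar> + 1) * (5 + real n + b) ^ k"
      by (rule mult_right_mono) (use n3 in auto)
    then show ?thesis by (simp add: algebra_simps)
  qed
  have D: "(5 + real n + b)^k * (2 * (\<bar>c\<bar> + 1)) \<le> (2 * real n)^k * (2 * (\<bar>c\<bar> + 1))"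
    by (rule mult_right_mono[OF B]) simp
  have "2 * (c * (5 + real n + b) ^ k) < 2^n"
    using A C D by linarith
  then show ?thesis using n2 by blast
qed

lemma samples_eq: "samples n v m = map_pmf (map (\<lambda>S. (S, v S))) (iid_list (pmf_of_set (Pow {1..n})) m)"
  unfolding samples_def by (rule iid_map)

lemma cov_agree:
  assumes "S \<noteq> {1}"
  shows "coverage (\<lambda>j. {0..<K}) S = coverage (\<lambda>j. if j = 1 then {} else {0..<K}) S"
proof -
  have "(\<Union>j\<in>S. if j = 1 then {} else {0..<K}) = (if S - {1} = {} then {} else {0..<K})" by auto
  moreover have "(S - {1} = {}) = (S = {})" using assms by auto
  ultimately show ?thesis by (simp add: coverage_def)
qed

theorem theorem9:
  shows "\<not> (\<exists>\<alpha>::real. 0 < \<alpha> \<and> \<alpha> \<le> 1 \<and> coverage_shapley_approximable \<alpha>)"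
proof
  assume "\<exists>\<alpha>::real. 0 < \<alpha> \<and> \<alpha> \<le> 1 \<and> coverage_shapley_approximable \<alpha>"
  then obtain \<alpha> A m where a0: "0 < \<alpha>" and a1: "\<alpha> \<le> 1"
    and ap: "alpha_approximates_coverage_shapley \<alpha> A m"
    unfolding coverage_shapley_approximable_def by blast
  have ap': "(\<exists>c k. \<forall>n \<delta>. n \<ge> 1 \<longrightarrow> \<delta> > 0 \<longrightarrow>
         real (m n \<delta>) \<le> c * (1 + real n + 1 / \<delta> + 1 / (1 - \<alpha>)) ^ k) \<and>
     (\<exists>p e. is_poly_fun p \<and> (\<forall>n\<ge>1. p n > 0) \<and> e \<longlonglongrightarrow> 0 \<and>
        (\<forall>n\<ge>1. \<forall>T. (\<forall>i. finite (T i)) \<longrightarrow> (\<forall>\<delta>>0.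
           measure_pmf.prob (bind_pmf (samples n (coverage T) (m n \<delta>)) (A n \<delta>))
             {\<phi>'. \<forall>i\<in>{1..n}. good_estimate \<alpha> (1 / p n) (e n) (shapley n (coverage T) i) (\<phi>' i)}
           \<ge> 1 - \<delta>)))"
    using ap unfolding alpha_approximates_coverage_shapley_def .
  obtain c k where bnd0: "\<forall>n \<delta>. n \<ge> 1 \<longrightarrow> \<delta> > 0 \<longrightarrow>
         real (m n \<delta>) \<le> c * (1 + real n + 1 / \<delta> + 1 / (1 - \<alpha>)) ^ k"
    using conjunct1[OF ap'] by (elim exE)
  obtain p e where pe: "is_poly_fun p \<and> (\<forall>n\<ge>1. p n > 0) \<and> e \<longlonglongrightarrow> 0 \<and>
        (\<forall>n\<ge>1. \<forall>T. (\<forall>i. finite (T i)) \<longrightarrow> (\<forall>\<delta>>0.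
           measure_pmf.prob (bind_pmf (samples n (coverage T) (m n \<delta>)) (A n \<delta>))
             {\<phi>'. \<forall>i\<in>{1..n}. good_estimate \<alpha> (1 / p n) (e n) (shapley n (coverage T) i) (\<phi>' i)}
           \<ge> 1 - \<delta>))"
    using conjunct2[OF ap'] by (elim exE)
  have bnd: "real (m n \<delta>) \<le> c * (1 + real n + 1 / \<delta> + 1 / (1 - \<alpha>)) ^ k"
    if "n \<ge> 1" "\<delta> > 0" for n \<delta> using bnd0 that by blast
  have ppos: "p n > 0" if "n \<ge> 1" for n using pe that by blast
  have H: "measure_pmf.prob (bind_pmf (samples n (coverage T) (m n \<delta>)) (A n \<delta>))
             {\<phi>'. \<forall>i\<in>{1..n}. good_estimate \<alpha> (1 / p n) (e n) (shapley n (coverage T) i) (\<phi>' i)}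
           \<ge> 1 - \<delta>"
    if "n \<ge> 1" "\<forall>i. finite (T i)" "\<delta> > 0" for n T \<delta>
  proof -
    have "\<forall>n\<ge>1. \<forall>T. (\<forall>i. finite (T i)) \<longrightarrow> (\<forall>\<delta>>0.
           measure_pmf.prob (bind_pmf (samples n (coverage T) (m n \<delta>)) (A n \<delta>))
             {\<phi>'. \<forall>i\<in>{1..n}. good_estimate \<alpha> (1 / p n) (e n) (shapley n (coverage T) i) (\<phi>' i)}
           \<ge> 1 - \<delta>)" using pe by (elim conjE)
    then show ?thesis using that by simp
  qed
  obtain n where n2: "n \<ge> 2" and nb: "2 * (c * (5 + real n + 1 / (1 - \<alpha>)) ^ k) < 2 ^ n"
    using growth by blast
  define M where "M = m n (1/4)"
  have Mb: "2 * real M < 2 ^ n"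
    using bnd[of n "1/4"] n2 nb unfolding M_def by (simp add: add.assoc)
  define t where "t = 1 / p n"
  have tpos: "t > 0" using ppos[of n] n2 unfolding t_def by simp
  define K where "K = nat \<lceil>fact n * (t + \<bar>e n\<bar> / \<alpha> + 1)\<rceil>"
  have Kge: "real K \<ge> fact n * (t + \<bar>e n\<bar> / \<alpha> + 1)"
    unfolding K_def by linarith
  define T1 where "T1 = (\<lambda>j::nat. {0..<K})"
  define T2 where "T2 = (\<lambda>j::nat. if j = 1 then {} else {0..<K})"
  have phi1: "shapley n (coverage T1) 1 \<ge> t + \<bar>e n\<bar> / \<alpha> + 1"
  proof -
    have "real K / fact n \<ge> t + \<bar>e n\<bar> / \<alpha> + 1"
      using Kge by (simp add: field_simps)
    then show ?thesis using shap1[of n K] n2 unfolding T1_def by linarith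
  qed
  have phi2: "shapley n (coverage T2) 1 = 0" unfolding T2_def by (rule shap2)
  let ?E1 = "{\<phi>'. \<forall>i\<in>{1..n}. good_estimate \<alpha> t (e n) (shapley n (coverage T1) i) (\<phi>' i)}"
  let ?E2 = "{\<phi>'. \<forall>i\<in>{1..n}. good_estimate \<alpha> t (e n) (shapley n (coverage T2) i) (\<phi>' i)}"
  let ?X = "{\<phi>'::nat \<Rightarrow> real. \<phi>' 1 > e n}"
  let ?Y = "{\<phi>'::nat \<Rightarrow> real. \<phi>' 1 \<le> e n}"
  have one: "(1::nat) \<in> {1..n}" using n2 by simp
  have E1X: "?E1 \<subseteq> ?X"
  proof
    fix \<phi>' assume "\<phi>' \<in> ?E1"
    then have g: "good_estimate \<alpha> t (e n) (shapley n (coverage T1) 1) (\<phi>' 1)" using one by blast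
    have "shapley n (coverage T1) 1 \<ge> t" using phi1 a0 by (smt (verit) divide_nonneg_pos abs_ge_zero)
    then have "\<alpha> * shapley n (coverage T1) 1 \<le> \<phi>' 1" using g unfolding good_estimate_def by blast
    moreover have "\<alpha> * shapley n (coverage T1) 1 \<ge> \<alpha> * (\<bar>e n\<bar> / \<alpha> + 1)"
      using phi1 a0 tpos by (intro mult_left_mono) auto
    moreover have "\<alpha> * (\<bar>e n\<bar> / \<alpha> + 1) = \<bar>e n\<bar> + \<alpha>" using a0 by (simp add: field_simps)
    ultimately show "\<phi>' \<in> ?X" using a0 by simp
  qed
  have E2Y: "?E2 \<subseteq> ?Y"
  proof
    fix \<phi>' assume "\<phi>' \<in> ?E2"
    then have g: "good_estimate \<alpha> t (e n) 0 (\<phi>' 1)" using one phi2 by force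
    then show "\<phi>' \<in> ?Y" using tpos unfolding good_estimate_def by auto
  qed
  let ?U = "pmf_of_set (Pow {1..n::nat})"
  let ?G = "Pow {1..n} - {{1::nat}}"
  have fin: "\<forall>i. finite (T1 i)" "\<forall>i. finite (T2 i)" unfolding T1_def T2_def by auto
  have P1: "measure_pmf.prob (bind_pmf (samples n (coverage T1) M) (A n (1/4))) ?X \<ge> 3/4"
  proof -
    have "measure_pmf.prob (bind_pmf (samples n (coverage T1) M) (A n (1/4))) ?E1 \<ge> 1 - 1/4"
      using H[of n T1 "1/4"] fin n2 unfolding M_def t_def by simp
    moreover have "measure_pmf.prob (bind_pmf (samples n (coverage T1) M) (A n (1/4))) ?E1
       \<le> measure_pmf.prob (bind_pmf (samples n (coverage T1) M) (A n (1/4))) ?X"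
      using E1X by (intro measure_pmf.finite_measure_mono) auto
    ultimately show ?thesis by simp
  qed
  have P2: "measure_pmf.prob (bind_pmf (samples n (coverage T2) M) (A n (1/4))) ?Y \<ge> 3/4"
  proof -
    have "measure_pmf.prob (bind_pmf (samples n (coverage T2) M) (A n (1/4))) ?E2 \<ge> 1 - 1/4"
      using H[of n T2 "1/4"] fin n2 unfolding M_def t_def by simp
    moreover have "measure_pmf.prob (bind_pmf (samples n (coverage T2) M) (A n (1/4))) ?E2
       \<le> measure_pmf.prob (bind_pmf (samples n (coverage T2) M) (A n (1/4))) ?Y"
      using E2Y by (intro measure_pmf.finite_measure_mono) auto
    ultimately show ?thesis by simp
  qed
  have tw: "measure_pmf.prob (bind_pmf (samples n (coverage T1) M) (A n (1/4))) ?X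
     + measure_pmf.prob (bind_pmf (samples n (coverage T2) M) (A n (1/4))) ?Y
     \<le> 1 + real M * measure (measure_pmf ?U) (-?G)"
    unfolding samples_eq
  proof (rule two_worlds)
    fix x assume "x \<in> ?G"
    then have "x \<noteq> {1}" by auto
    from cov_agree[OF this, of K] show "(x, coverage T1 x) = (x, coverage T2 x)"
      by (simp add: T1_def T2_def)
  qed auto
  have ig: "Pow {1..n} \<inter> - ?G = {{1}}" using n2 by auto
  have ne: "Pow {1..n::nat} \<noteq> {}" by blast
  have fp: "finite (Pow {1..n::nat})" by simp
  have "measure (measure_pmf ?U) (-?G) = real (card (Pow {1..n} \<inter> - ?G)) / real (card (Pow {1..n::nat}))"
    by (rule measure_pmf_of_set[OF ne fp])
  also have "\<dots> = 1 / 2 ^ n" unfolding ig by (simp add: card_Pow)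
  finally have meq: "measure (measure_pmf ?U) (-?G) = 1 / 2 ^ n" .
  have "real M * (1 / 2 ^ n) < 1/2"
  proof -
    have "real M * (1 / 2 ^ n) = real M / 2 ^ n" by simp
    also have "\<dots> < 1/2" using Mb by (simp add: divide_less_eq)
    finally show ?thesis .
  qed
  then have "real M * measure (measure_pmf ?U) (-?G) < 1/2"
    unfolding meq .
  then show False using tw P1 P2 by linarith
qed
end
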